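(* Let $n,m,\ell$ be integers with $n-1\ge m\ge \ell\ge 0$. Then \begin{align*} &\mathfrak Z_n(1^{\{m\}})\,\mathfrak Z_n((-1)^{\{\ell\}})\\ &=\binom{n-m+\ell-1}{n-m-1}\mathfrak Z_n(1^{\{m-\ell\}})+\Big(\prod_{r=1}^{n-1}(1-\zeta_n^r)\Big)\sum_{j=0}^{n-m-2}\binom{n-m+\ell-3-2j}{\ell-1-j}\mathcal Y_n\big(2^{\{m-\ell+1+j\}},1^{\{n-m+\ell-3-2j\}}\big). \end{align*}
   Context: Let $\zeta_n=e^{2\pi\sqrt{-1}/n}$. For integers $s_1,\dots,s_m$ (negative values allowed), define $\mathfrak Z_n(s_1,\dots,s_m):=\sum_{1\le i_1<\cdots<i_m\le n-1}\prod_{k=1}^{m}(1-\zeta_n^{i_k})^{-s_k}$ (equal to $1$ if $m=0$ and to $0$ if $m>n-1$). Define $\mathcal Y_n(s_1,\dots,s_m):=\sum_{\sigma}\mathfrak Z_n(\sigma)$, where $\sigma$ runs over all distinct rearrangements of $(s_1,\dots,s_m)$; $\mathcal Y_n$ of the empty sequence is $1$. Notation: $a^{\{k\}}$ denotes the block $a,\dots,a$ of length $k$ (so $(-1)^{\{\ell\}}$ is $-1,\dots,-1$ repeated $\ell$ times); any $\mathcal Y_n$ term in which some block has negative length is interpreted as $0$. Binomial coefficients $\binom{a}{b}$ are $0$ when $b<0$ or $b>a\ge 0$. *)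

theory Defs
  imports Complex_Main "HOL-Library.Multiset"
begin

definition zeta :: "nat \<Rightarrow> complex" where
  "zeta n = cis (2 * pi / real n)"

definition Zfrak :: "nat \<Rightarrow> int list \<Rightarrow> complex" where
  "Zfrak n s = (\<Sum>is\<in>{is. length is = length s \<and> sorted_wrt (<) is \<and> set is \<subseteq> {1..n-1}}.
      \<Prod>k<length s. (1 - zeta n ^ (is ! k)) powi (- (s ! k)))"

definition Ycal :: "nat \<Rightarrow> int list \<Rightarrow> complex" where
  "Ycal n s = (\<Sum>t\<in>{t. mset t = mset s}. Zfrak n t)"

text \<open>Binomial coefficient for integer arguments, used only with a >= 0:
  zero when b < 0 or b > a.\<close>
definition ibinom :: "int \<Rightarrow> int \<Rightarrow> int" where
  "ibinom a b = (if b < 0 \<or> a < 0 then 0 else int (nat a choose nat b))"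

end

theory Submission
  imports Defs
begin


definition SL :: "nat \<Rightarrow> nat \<Rightarrow> nat list set" where
  "SL n L = {is. length is = L \<and> sorted_wrt (<) is \<and> set is \<subseteq> {1..n-1}}"

definition phi :: "nat list \<Rightarrow> int list \<Rightarrow> nat \<Rightarrow> int" where
  "phi is t i = (case map_of (zip is t) i of None \<Rightarrow> 0 | Some v \<Rightarrow> v)"

definition FF :: "nat \<Rightarrow> int list \<Rightarrow> (nat \<Rightarrow> int) set" where
  "FF n s = {f. (\<forall>i. i \<notin> {1..n-1} \<longrightarrow> f i = 0) \<and>
       image_mset f (mset_set {i\<in>{1..n-1}. f i \<noteq> 0}) = mset s}"

definition TT :: "nat \<Rightarrow> (nat \<Rightarrow> int) \<Rightarrow> complex" where
  "TT n f = (\<Prod>i\<in>{1..n-1}. (1 - zeta n ^ i) powi (- f i))"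

lemma finite_SL: "finite (SL n L)"
proof -
  have "SL n L \<subseteq> {xs. set xs \<subseteq> {1..n-1} \<and> length xs = L}" by (auto simp: SL_def)
  moreover have "finite {xs. set xs \<subseteq> {1..n-1} \<and> length xs = L}"
    by (rule finite_lists_length_eq) simp
  ultimately show ?thesis by (rule finite_subset)
qed

lemma phi_nth:
  assumes "length t = length is" "distinct is" "k < length is"
  shows "phi is t (is ! k) = t ! k"
  using map_of_zip_nth[of "is" t k] assms by (simp add: phi_def)

lemma phi_out:
  assumes "length t = length is" "i \<notin> set is"
  shows "phi is t i = 0"
  proof - have "map_of (zip is t) i = None" using assms map_of_zip_is_None[of "is" t i] by simp thus ?thesis by (simp add: phi_def) qed

lemma map_phi:
  assumes "length t = length is" "distinct is"
  shows "map (phi is t) is = t"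
  using assms by (auto intro!: nth_equalityI simp: phi_nth)

lemma term_eq:
  assumes "is \<in> SL n (length t)"
  shows "(\<Prod>k<length t. (1 - zeta n ^ (is ! k)) powi (- (t ! k))) = TT n (phi is t)"
proof -
  have d: "distinct is" and l: "length is = length t" and sub: "set is \<subseteq> {1..n-1}"
    using assms by (auto simp: SL_def simp: strict_sorted_iff)
  let ?g = "\<lambda>i. (1 - zeta n ^ i) powi (- phi is t i)"
  have "TT n (phi is t) = (\<Prod>i\<in>set is. ?g i)"
    unfolding TT_def
    by (rule prod.mono_neutral_right) (use sub l in \<open>auto simp: phi_out\<close>)
  also have "\<dots> = (\<Prod>k<length is. ?g (is ! k))"
  proof -
    have "set is = (!) is ` {..<length is}" by (auto simp: set_conv_nth)
    moreover have "inj_on ((!) is) {..<length is}" using d by (simp add: inj_on_def nth_eq_iff_index_eq)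
    ultimately show ?thesis by (simp add: prod.reindex)
  qed
  also have "\<dots> = (\<Prod>k<length t. (1 - zeta n ^ (is ! k)) powi (- (t ! k)))"
    using l d by (auto intro!: prod.cong simp: phi_nth)
  finally show ?thesis by simp
qed


lemma phi_supp:
  assumes "length t = length is" "distinct is" "0 \<notin> set t"
  shows "{i. phi is t i \<noteq> 0} = set is"
proof
  show "{i. phi is t i \<noteq> 0} \<subseteq> set is" using assms phi_out by blast
  show "set is \<subseteq> {i. phi is t i \<noteq> 0}"
  proof
    fix i assume "i \<in> set is"
    then obtain k where k: "k < length is" "i = is ! k" by (auto simp: in_set_conv_nth)
    then have "phi is t i = t ! k" using assms phi_nth by simp
    moreover have "t ! k \<in> set t" using k assms by simp
    ultimately show "i \<in> {i. phi is t i \<noteq> 0}" using assms by auto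
  qed
qed

lemma Ycal_FF:
  assumes "0 \<notin> set s"
  shows "Ycal n s = sum (TT n) (FF n s)"
proof -
  let ?M = "{t. mset t = mset s}"
  let ?S = "SL n (length s)"
  let ?psi = "\<lambda>p. phi (snd p) (fst p)"
  have fM: "finite ?M" by (rule mset_eq_finite)
  have "Ycal n s = (\<Sum>t\<in>?M. \<Sum>ix\<in>?S. TT n (phi ix t))"
    unfolding Ycal_def Zfrak_def
  proof (rule sum.cong[OF refl])
    fix t assume "t \<in> ?M"
    then have lt: "length t = length s" by (auto dest: mset_eq_length)
    show "(\<Sum>ix\<in>{ix. length ix = length t \<and> sorted_wrt (<) ix \<and> set ix \<subseteq> {1..n - 1}}.
            \<Prod>k<length t. (1 - zeta n ^ (ix ! k)) powi - (t ! k)) = (\<Sum>ix\<in>?S. TT n (phi ix t))"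
      using term_eq[of _ n t] lt by (auto simp: SL_def intro!: sum.cong)
  qed
  also have "\<dots> = (\<Sum>p\<in>?M \<times> ?S. TT n (?psi p))"
    by (simp add: sum.cartesian_product case_prod_beta)
  also have "\<dots> = sum (TT n) (?psi ` (?M \<times> ?S))"
  proof (rule sum.reindex[symmetric, unfolded comp_def])
    show "inj_on ?psi (?M \<times> ?S)"
    proof (rule inj_onI)
      fix p q assume p: "p \<in> ?M \<times> ?S" and q: "q \<in> ?M \<times> ?S" and e: "?psi p = ?psi q"
      obtain t ix where [simp]: "p = (t, ix)" by (cases p)
      obtain t' iy where [simp]: "q = (t', iy)" by (cases q)
      have lt: "length t = length s" "length t' = length s" using p q by (auto dest: mset_eq_length)
      have z: "0 \<notin> set t" "0 \<notin> set t'" using p q assms by (auto dest: mset_eq_setD)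
      have si: "sorted_wrt (<) ix" "sorted_wrt (<) iy" "length ix = length s" "length iy = length s"
        using p q by (auto simp: SL_def)
      then have di: "distinct ix" "distinct iy" by (auto simp: strict_sorted_iff)
      have "set ix = set iy"
        using phi_supp[of t ix] phi_supp[of t' iy] e lt si di z by simp
      then have ii: "ix = iy" using si by (metis sorted_distinct_set_unique strict_sorted_iff)
      have "t = map (phi ix t) ix" using map_phi[of t ix] lt si di by simp
      also have "\<dots> = map (phi iy t') iy" using e ii by simp
      also have "\<dots> = t'" using map_phi[of t' iy] lt si di by simp
      finally show "p = q" using ii by simp
    qed
  qed
  also have "?psi ` (?M \<times> ?S) = FF n s"
  proof
    show "?psi ` (?M \<times> ?S) \<subseteq> FF n s"
    proof
      fix f assume "f \<in> ?psi ` (?M \<times> ?S)"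
      then obtain t ix where t: "mset t = mset s" and ix: "ix \<in> ?S" and f: "f = phi ix t" by auto
      have lt: "length t = length ix" using t ix by (auto simp: SL_def dest: mset_eq_length)
      have z: "0 \<notin> set t" using t assms by (auto dest: mset_eq_setD)
      have si: "sorted_wrt (<) ix" "set ix \<subseteq> {1..n-1}" using ix by (auto simp: SL_def)
      then have di: "distinct ix" by (auto simp: strict_sorted_iff)
      have sup: "{i. f i \<noteq> 0} = set ix" using phi_supp[OF lt di z] f by simp
      have "\<forall>i. i \<notin> {1..n-1} \<longrightarrow> f i = 0" using sup si by blast
      moreover have "{i\<in>{1..n-1}. f i \<noteq> 0} = set ix" using sup si by blast
      moreover have "image_mset f (mset_set (set ix)) = mset s"
        using di map_phi[OF lt di] f t by (simp add: mset_set_set flip: mset_map)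
      ultimately show "f \<in> FF n s" by (simp add: FF_def)
    qed
    show "FF n s \<subseteq> ?psi ` (?M \<times> ?S)"
    proof
      fix f assume f: "f \<in> FF n s"
      let ?Sp = "{i\<in>{1..n-1}. f i \<noteq> 0}"
      define ix where "ix = sorted_list_of_set ?Sp"
      define t where "t = map f ix"
      have fin: "finite ?Sp" by simp
      have setis: "set ix = ?Sp" using fin by (simp add: ix_def)
      have di: "distinct ix" and so: "sorted_wrt (<) ix" by (simp_all add: ix_def)
      have im: "image_mset f (mset_set ?Sp) = mset s" using f by (simp add: FF_def)
      have "mset ix = mset_set ?Sp" using di setis by (metis mset_set_set)
      then have mt: "mset t = mset s" using im by (simp add: t_def mset_map)
      have "length ix = length s"
      proof -
        have "length ix = size (mset_set ?Sp)" using fin by (simp add: ix_def)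
        also have "\<dots> = size (mset s)" by (metis im size_image_mset)
        finally show ?thesis by simp
      qed
      then have isS: "ix \<in> ?S" using so setis by (auto simp: SL_def)
      have lt: "length t = length ix" by (simp add: t_def)
      have "phi ix t = f"
      proof
        fix i
        show "phi ix t i = f i"
        proof (cases "i \<in> set ix")
          case True
          then obtain k where k: "k < length ix" "i = ix ! k" by (auto simp: in_set_conv_nth)
          then show ?thesis using phi_nth[OF lt di k(1)] by (simp add: t_def)
        next
          case False
          then have "f i = 0" using setis f by (auto simp: FF_def)
          then show ?thesis using False phi_out[OF lt] by simp
        qed
      qed
      then show "f \<in> ?psi ` (?M \<times> ?S)" using mt isS by force
    qed
  qed
  finally show ?thesis .
qed


definition cnt :: "nat \<Rightarrow> (nat \<Rightarrow> int) \<Rightarrow> int \<Rightarrow> nat" where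
  "cnt n f v = card {i\<in>{1..n-1}. f i = v}"

definition GG :: "nat \<Rightarrow> nat \<Rightarrow> nat \<Rightarrow> (nat \<Rightarrow> int) set" where
  "GG n a b = {f. (\<forall>i. i \<notin> {1..n-1} \<longrightarrow> f i = 0) \<and> (\<forall>i\<in>{1..n-1}. f i \<in> {0,1,2})
      \<and> cnt n f 2 = a \<and> cnt n f 1 = b}"

definition HH :: "nat \<Rightarrow> nat \<Rightarrow> (nat \<Rightarrow> int) set" where
  "HH n l = {f. (\<forall>i. i \<notin> {1..n-1} \<longrightarrow> f i = 0) \<and> (\<forall>i\<in>{1..n-1}. f i \<in> {0,-1})
      \<and> cnt n f (-1) = l}"

lemma count_image_mset_set:
  assumes "finite S"
  shows "count (image_mset f (mset_set S)) v = card {i\<in>S. f i = v}"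
proof -
  have "count (image_mset f (mset_set S)) v = (\<Sum>y\<in>f -` {v} \<inter> S. 1)"
    unfolding count_image_mset using assms by (intro sum.cong) auto
  also have "\<dots> = card {i\<in>S. f i = v}" by (simp add: Int_commute vimage_def Collect_conj_eq)
  finally show ?thesis .
qed

lemma FF_iff:
  assumes "0 \<notin> set s"
  shows "f \<in> FF n s \<longleftrightarrow> (\<forall>i. i \<notin> {1..n-1} \<longrightarrow> f i = 0) \<and>
            (\<forall>v. v \<noteq> 0 \<longrightarrow> cnt n f v = count (mset s) v)"
proof -
  let ?S = "{i\<in>{1..n-1}. f i \<noteq> 0}"
  have c: "count (image_mset f (mset_set ?S)) v = (if v = 0 then 0 else cnt n f v)" for v
    by (cases "v = 0") (auto simp: count_image_mset_set cnt_def intro!: arg_cong[where f=card])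
  have "image_mset f (mset_set ?S) = mset s \<longleftrightarrow> (\<forall>v. count (image_mset f (mset_set ?S)) v = count (mset s) v)"
    by (simp add: multiset_eq_iff)
  also have "\<dots> \<longleftrightarrow> (\<forall>v. v \<noteq> 0 \<longrightarrow> cnt n f v = count (mset s) v)"
  proof
    assume h: "\<forall>v. count (image_mset f (mset_set ?S)) v = count (mset s) v"
    show "\<forall>v. v \<noteq> 0 \<longrightarrow> cnt n f v = count (mset s) v"
    proof (intro allI impI)
      fix v :: int assume "v \<noteq> 0"
      then show "cnt n f v = count (mset s) v" using h[rule_format, of v] c[of v] by simp
    qed
  next
    assume h: "\<forall>v. v \<noteq> 0 \<longrightarrow> cnt n f v = count (mset s) v"
    show "\<forall>v. count (image_mset f (mset_set ?S)) v = count (mset s) v"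
    proof
      fix v :: int
      show "count (image_mset f (mset_set ?S)) v = count (mset s) v"
      proof (cases "v = 0")
        case True
        then have "count (mset s) v = 0" using assms by (simp add: count_eq_zero_iff)
        then show ?thesis using c[of v] True by simp
      next
        case False
        then show ?thesis using c[of v] h by simp
      qed
    qed
  qed
  finally show ?thesis by (simp add: FF_def)
qed

lemma card_zero_fin: "finite S \<Longrightarrow> card {i\<in>S. P i} = 0 \<longleftrightarrow> (\<forall>i\<in>S. \<not> P i)"
  by auto

lemma FF_GG: "FF n (replicate a 2 @ replicate b 1) = GG n a b"
proof -
  have z: "0 \<notin> set (replicate a (2::int) @ replicate b 1)" by auto
  have cm: "count (mset (replicate a (2::int) @ replicate b 1)) v = (if v = 2 then a else 0) + (if v = 1 then b else 0)" for v
    by simp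
  show ?thesis
  proof (intro set_eqI iffI)
    fix f assume "f \<in> FF n (replicate a 2 @ replicate b 1)"
    then have o: "\<forall>i. i \<notin> {1..n-1} \<longrightarrow> f i = 0" and c: "\<And>v. v \<noteq> 0 \<Longrightarrow> cnt n f v = count (mset (replicate a (2::int) @ replicate b 1)) v"
      using FF_iff[OF z] by auto
    have "f i \<in> {0,1,2}" if "i \<in> {1..n-1}" for i
    proof (rule ccontr)
      assume a: "f i \<notin> {0,1,2}"
      then have "cnt n f (f i) = 0" using c[of "f i"] cm by auto
      then show False using that by (force simp: cnt_def)
    qed
    then show "f \<in> GG n a b" using o c[of 2] c[of 1] cm by (simp add: GG_def)
  next
    fix f assume f: "f \<in> GG n a b"
    have "cnt n f v = count (mset (replicate a (2::int) @ replicate b 1)) v" if "v \<noteq> 0" for v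
    proof (cases "v = 1 \<or> v = 2")
      case True then show ?thesis using f by (auto simp: GG_def)
    next
      case False
      then have "cnt n f v = 0" using f that by (auto simp: GG_def cnt_def)
      then show ?thesis using False by simp
    qed
    then show "f \<in> FF n (replicate a 2 @ replicate b 1)" using FF_iff[OF z] f by (simp add: GG_def)
  qed
qed

lemma FF_HH: "FF n (replicate l (-1)) = HH n l"
proof -
  have z: "0 \<notin> set (replicate l (-1::int))" by auto
  show ?thesis
  proof (intro set_eqI iffI)
    fix f assume "f \<in> FF n (replicate l (-1))"
    then have o: "\<forall>i. i \<notin> {1..n-1} \<longrightarrow> f i = 0" and c: "\<And>v. v \<noteq> 0 \<Longrightarrow> cnt n f v = count (mset (replicate l (-1::int))) v"
      using FF_iff[OF z] by auto
    have "f i \<in> {0,-1}" if "i \<in> {1..n-1}" for i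
    proof (rule ccontr)
      assume a: "f i \<notin> {0,-1}"
      then have "cnt n f (f i) = 0" using c[of "f i"] by auto
      then show False using that by (force simp: cnt_def)
    qed
    then show "f \<in> HH n l" using o c[of "-1"] by (simp add: HH_def)
  next
    fix f assume f: "f \<in> HH n l"
    have "cnt n f v = count (mset (replicate l (-1::int))) v" if "v \<noteq> 0" for v
    proof (cases "v = -1")
      case True then show ?thesis using f by (auto simp: HH_def)
    next
      case False
      then have "cnt n f v = 0" using f that by (auto simp: HH_def cnt_def)
      then show ?thesis using False by simp
    qed
    then show "f \<in> FF n (replicate l (-1))" using FF_iff[OF z] f by (simp add: HH_def)
  qed
qed

lemma Zfrak_rep: "Zfrak n (replicate m v) = Ycal n (replicate m v)"
proof -
  have "{t. mset t = mset (replicate m v)} = {replicate m v}"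
  proof (intro set_eqI iffI)
    fix t assume "t \<in> {t. mset t = mset (replicate m v)}"
    then have "mset t = mset (replicate m v)" by simp
    then have "length t = m" "set t = set (replicate m v)"
      by (metis length_replicate mset_eq_length, metis mset_eq_setD)
    then show "t \<in> {replicate m v}" by (auto intro!: replicate_eqI)
  qed simp
  then show ?thesis by (simp add: Ycal_def)
qed



lemma c_nz:
  assumes "i \<in> {1..n-1}"
  shows "1 - zeta n ^ i \<noteq> 0"
proof
  assume "1 - zeta n ^ i = 0"
  then have "cis (real i * (2 * pi / real n)) = 1" by (simp add: zeta_def DeMoivre)
  then have "cos (real i * (2 * pi / real n)) = 1" by (metis cis.sel(1) one_complex.sel(1))
  then obtain k :: int where k: "real i * (2 * pi / real n) = k * 2 * pi" by (auto simp: cos_one_2pi_int)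
  have n: "n \<ge> 2" "i \<ge> 1" "i < n" using assms by auto
  then have "real i / real n = k" using k by (simp add: field_simps)
  moreover have "0 < real i / real n" "real i / real n < 1" using n by auto
  ultimately have "0 < k" "k < 1" by simp_all
  then show False by simp
qed

definition one :: "nat \<Rightarrow> nat \<Rightarrow> int" where
  "one n = (\<lambda>i. if i \<in> {1..n-1} then 1 else 0)"

lemma TT_add: "TT n (\<lambda>i. f i + g i) = TT n f * TT n g"
  unfolding TT_def prod.distrib[symmetric]
proof (rule prod.cong[OF refl])
  fix i assume "i \<in> {1..n-1}"
  then have "1 - zeta n ^ i \<noteq> 0" by (rule c_nz)
  then show "(1 - zeta n ^ i) powi - (f i + g i) = (1 - zeta n ^ i) powi - f i * (1 - zeta n ^ i) powi - g i"
    by (simp add: power_int_add[symmetric])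
qed

lemma TT_one_P: "TT n (one n) * (\<Prod>r=1..n-1. (1 - zeta n ^ r)) = 1"
  unfolding TT_def prod.distrib[symmetric]
proof (rule prod.neutral, intro ballI)
  fix i assume i: "i \<in> {1..n-1}"
  then have "1 - zeta n ^ i \<noteq> 0" by (rule c_nz)
  then show "(1 - zeta n ^ i) powi - one n i * (1 - zeta n ^ i) = 1"
    using i by (simp add: one_def power_int_minus)
qed


definition VV :: "nat \<Rightarrow> (nat \<Rightarrow> int) set" where
  "VV n = {f. (\<forall>i. i \<notin> {1..n-1} \<longrightarrow> f i = 0) \<and> (\<forall>i\<in>{1..n-1}. f i \<in> {0,1,2})}"

lemma finite_VV: "finite (VV n)"
proof -
  have "VV n = {f. \<forall>x. (x \<in> {1..n-1} \<longrightarrow> f x \<in> {0,1,2}) \<and> (x \<notin> {1..n-1} \<longrightarrow> f x = 0)}"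
    by (auto simp: VV_def)
  then show ?thesis by (simp only:) (rule finite_set_of_finite_funs; simp)
qed

lemma finite_HH: "finite (HH n l)"
proof -
  have "HH n l \<subseteq> {f. \<forall>x. (x \<in> {1..n-1} \<longrightarrow> f x \<in> {0,-1}) \<and> (x \<notin> {1..n-1} \<longrightarrow> f x = 0)}"
    by (auto simp: HH_def)
  then show ?thesis by (rule finite_subset) (rule finite_set_of_finite_funs; simp)
qed

lemma GG_sub_VV: "GG n a b \<subseteq> VV n" by (auto simp: GG_def VV_def)

lemma finite_GG: "finite (GG n a b)" using finite_subset[OF GG_sub_VV finite_VV] .

lemma fiber_card:
  assumes f: "f \<in> VV n"
  shows "card {p \<in> GG n 0 m \<times> HH n l. (\<lambda>i. fst p i + snd p i + one n i) = f} =
     (if cnt n f 2 \<le> m \<and> cnt n f 1 + 2 * cnt n f 2 + l = m + (n-1)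
      then cnt n f 1 choose (m - cnt n f 2) else 0)"
proof -
  define D where "D = {1..n-1}"
  define S2 where "S2 = {i\<in>D. f i = 2}"
  define S1 where "S1 = {i\<in>D. f i = 1}"
  define S0 where "S0 = {i\<in>D. f i = 0}"
  define k where "k = cnt n f 2"
  define r where "r = cnt n f 1"
  define F where "F = {p \<in> GG n 0 m \<times> HH n l. (\<lambda>i. fst p i + snd p i + one n i) = f}"
  have fD: "finite D" by (simp add: D_def)
  have fin: "finite S0" "finite S1" "finite S2" using fD by (auto simp: S0_def S1_def S2_def)
  have kr: "card S2 = k" "card S1 = r" by (simp_all add: k_def r_def S2_def S1_def cnt_def D_def)
  have Dun: "D = S0 \<union> S1 \<union> S2" using f by (auto simp: VV_def D_def S0_def S1_def S2_def)
  have cD: "card D = n - 1" by (simp add: D_def)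
  have c0: "card S0 + r + k = n - 1"
  proof -
    have u1: "card (S0 \<union> S1) = card S0 + card S1" using fin
      by (intro card_Un_disjoint) (auto simp: S0_def S1_def)
    have "card D = card (S0 \<union> S1) + card S2" unfolding Dun using fin
      by (intro card_Un_disjoint) (auto simp: S0_def S1_def S2_def)
    then have "card D = card S0 + card S1 + card S2" using u1 by simp
    then show ?thesis using cD kr by simp
  qed
  define gA where "gA = (\<lambda>A i. if i \<in> S2 \<union> A then 1 else (0::int))"
  define hA where "hA = (\<lambda>A i. if i \<in> S0 \<union> A then -1 else (0::int))"
  have claim1: "\<exists>A. A \<subseteq> S1 \<and> card A + k = m \<and> card S0 + card A = l \<and> p = (gA A, hA A)"
    if p: "p \<in> F" for p
  proof -
    obtain g h where [simp]: "p = (g, h)" by (cases p)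
    have g: "g \<in> GG n 0 m" and h: "h \<in> HH n l" and e: "\<And>i. g i + h i + one n i = f i"
      using p by (auto simp: F_def)
    have go: "\<And>i. i \<notin> D \<Longrightarrow> g i = 0" and ho: "\<And>i. i \<notin> D \<Longrightarrow> h i = 0"
      using g h by (auto simp: GG_def HH_def D_def)
    have "card {i\<in>D. g i = 2} = 0" using g by (simp add: GG_def cnt_def D_def)
    then have "\<forall>i\<in>D. g i \<noteq> 2" using fD by simp
    then have gv: "\<And>i. i \<in> D \<Longrightarrow> g i = 0 \<or> g i = 1" using g by (auto simp: GG_def D_def)
    have hv: "\<And>i. i \<in> D \<Longrightarrow> h i = 0 \<or> h i = -1" using h by (auto simp: HH_def D_def)
    have oD: "\<And>i. i \<in> D \<Longrightarrow> one n i = 1" by (simp add: one_def D_def)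
    define A where "A = {i\<in>S1. g i = 1}"
    have AS: "A \<subseteq> S1" by (auto simp: A_def)
    have ge: "{i\<in>D. g i = 1} = S2 \<union> A"
    proof -
      { fix i assume i: "i \<in> D"
        have "f i = g i + h i + 1" using e[of i] oD[OF i] by simp
        then have "g i = 1 \<longleftrightarrow> i \<in> S2 \<union> A" using gv[OF i] hv[OF i] i
          by (auto simp: S2_def A_def S1_def) }
      then show ?thesis by (auto simp: S2_def A_def S1_def)
    qed
    have he: "{i\<in>D. h i = -1} = S0 \<union> A"
    proof -
      { fix i assume i: "i \<in> D"
        have "f i = g i + h i + 1" using e[of i] oD[OF i] by simp
        then have "h i = -1 \<longleftrightarrow> i \<in> S0 \<union> A" using gv[OF i] hv[OF i] i
          by (auto simp: S0_def A_def S1_def) }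
      then show ?thesis by (auto simp: S0_def A_def S1_def)
    qed
    have finA: "finite A" using AS fin finite_subset by blast
    have "m = card (S2 \<union> A)" using g ge by (simp add: GG_def cnt_def D_def)
    also have "\<dots> = k + card A" using finA fin kr
      by (subst card_Un_disjoint) (auto simp: A_def S1_def S2_def)
    finally have m: "card A + k = m" by simp
    have "l = card (S0 \<union> A)" using h he by (simp add: HH_def cnt_def D_def)
    also have "\<dots> = card S0 + card A" using finA fin
      by (subst card_Un_disjoint) (auto simp: A_def S1_def S0_def)
    finally have l: "card S0 + card A = l" by simp
    have "g = gA A"
    proof
      fix i show "g i = gA A i"
        using ge go gv by (cases "i \<in> D") (auto simp: gA_def A_def S1_def S2_def)
    qed
    moreover have "h = hA A"
    proof
      fix i show "h i = hA A i"
        using he ho hv by (cases "i \<in> D") (auto simp: hA_def A_def S1_def S0_def)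
    qed
    ultimately show ?thesis using AS m l by auto
  qed
  show ?thesis
  proof (cases "k \<le> m \<and> r + 2 * k + l = m + (n-1)")
    case False
    have "F = {}"
    proof (rule ccontr)
      assume "F \<noteq> {}"
      then obtain p where "p \<in> F" by blast
      from claim1[OF this] obtain A :: "nat set" where "card A + k = m" "card S0 + card A = l" by blast
      then show False using False c0 by linarith
    qed
    then have "card F = 0" by simp
    then have "card F = (if k \<le> m \<and> r + 2 * k + l = m + (n-1) then r choose (m - k) else 0)"
      by (subst if_not_P[OF False]) simp
    then show ?thesis by (simp only: F_def k_def r_def)
  next
    case True
    have kk: "k \<le> m" and rr: "r + 2 * k + l = m + (n-1)" using True by auto
    have "F = (\<lambda>A. (gA A, hA A)) ` {A. A \<subseteq> S1 \<and> card A = m - k}"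
    proof
      show "F \<subseteq> (\<lambda>A. (gA A, hA A)) ` {A. A \<subseteq> S1 \<and> card A = m - k}"
      proof
        fix p assume "p \<in> F"
        from claim1[OF this] obtain A :: "nat set" where "A \<subseteq> S1" "card A + k = m" "p = (gA A, hA A)" by blast
        then show "p \<in> (\<lambda>A. (gA A, hA A)) ` {A. A \<subseteq> S1 \<and> card A = m - k}" by force
      qed
      show "(\<lambda>A. (gA A, hA A)) ` {A. A \<subseteq> S1 \<and> card A = m - k} \<subseteq> F"
      proof clarify
        fix A assume AS: "A \<subseteq> S1" and cA: "card A = m - k"
        have finA: "finite A" using AS fin finite_subset by blast
        have S12: "S2 \<union> A \<subseteq> D" "S0 \<union> A \<subseteq> D" using AS by (auto simp: S1_def S2_def S0_def)
        have e1: "{i\<in>{1..n-1}. gA A i = 1} = S2 \<union> A" using S12 by (auto simp: gA_def D_def)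
        have e2: "{i\<in>{1..n-1}. gA A i = 2} = {}" by (auto simp: gA_def)
        have e3: "{i\<in>{1..n-1}. hA A i = -1} = S0 \<union> A" using S12 by (auto simp: hA_def D_def)
        have "card (S2 \<union> A) = k + card A" using finA fin kr
          by (subst card_Un_disjoint) (auto simp: S1_def S2_def dest: subsetD[OF AS])
        then have cg: "cnt n (gA A) 1 = m" using e1 cA True by (simp add: cnt_def)
        have u: "card (S0 \<union> A) = card S0 + card A" using finA fin
          by (subst card_Un_disjoint) (auto simp: S1_def S0_def dest: subsetD[OF AS])
        have l1: "card S0 + card A = l" using cA kk rr c0 by linarith
        have ch: "cnt n (hA A) (-1) = l" unfolding cnt_def e3 u l1 ..
        have "gA A \<in> GG n 0 m" using S12 cg e2 by (auto simp: GG_def gA_def D_def cnt_def)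
        moreover have "hA A \<in> HH n l" using S12 ch by (auto simp: HH_def hA_def D_def)
        moreover have "(\<lambda>i. gA A i + hA A i + one n i) = f"
        proof
          fix i show "gA A i + hA A i + one n i = f i"
          proof (cases "i \<in> D")
            case True
            then show ?thesis using Dun AS
              by (auto simp: gA_def hA_def one_def D_def S0_def S1_def S2_def)
          next
            case False
            then show ?thesis using f S12 by (auto simp: gA_def hA_def one_def D_def VV_def)
          qed
        qed
        ultimately show "(gA A, hA A) \<in> F" by (simp add: F_def)
      qed
    qed
    moreover have "inj_on (\<lambda>A. (gA A, hA A)) {A. A \<subseteq> S1 \<and> card A = m - k}"
    proof (rule inj_onI)
      fix A B assume A: "A \<in> {A. A \<subseteq> S1 \<and> card A = m - k}" and B: "B \<in> {A. A \<subseteq> S1 \<and> card A = m - k}"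
        and e: "(gA A, hA A) = (gA B, hA B)"
      have "\<And>X. X \<subseteq> S1 \<Longrightarrow> X = {i\<in>S1. gA X i = 1}"
        by (auto simp: gA_def S1_def S2_def)
      have "gA A = gA B" using e by simp
      then have "{i\<in>S1. gA A i = 1} = {i\<in>S1. gA B i = 1}" by simp
      then show "A = B" using A B \<open>\<And>X. X \<subseteq> S1 \<Longrightarrow> X = {i\<in>S1. gA X i = 1}\<close> by auto
    qed
    ultimately have "card F = card {A. A \<subseteq> S1 \<and> card A = m - k}" by (simp add: card_image)
    also have "\<dots> = r choose (m - k)" using n_subsets[OF fin(2)] kr by simp
    finally have "card F = (if k \<le> m \<and> r + 2 * k + l = m + (n-1) then r choose (m - k) else 0)"
      by (subst if_P[OF True]) simp
    then show ?thesis by (simp only: F_def k_def r_def)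
  qed
qed


lemma Ycal_GG: "Ycal n (replicate a 2 @ replicate b 1) = sum (TT n) (GG n a b)"
  using Ycal_FF[of "replicate a 2 @ replicate b 1" n] FF_GG[of n a b] by auto

lemma Zfrak_1: "Zfrak n (replicate m 1) = sum (TT n) (GG n 0 m)"
  using Zfrak_rep[of n m 1] Ycal_GG[of n 0 m] by simp

lemma Zfrak_m1: "Zfrak n (replicate l (-1)) = sum (TT n) (HH n l)"
  using Zfrak_rep[of n l "-1"] Ycal_FF[of "replicate l (-1)" n] FF_HH[of n l] by auto

lemma GG0_vals: "g \<in> GG n 0 m \<Longrightarrow> i \<in> {1..n-1} \<Longrightarrow> g i = 0 \<or> g i = 1"
proof -
  assume g: "g \<in> GG n 0 m" and i: "i \<in> {1..n-1}"
  have "card {i\<in>{1..n-1}. g i = 2} = 0" using g by (simp add: GG_def cnt_def)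
  then have "g i \<noteq> 2" using i by (auto simp del: atLeastAtMost_iff)
  then show ?thesis using g i by (auto simp: GG_def)
qed

lemma cnt_le: "cnt n f v \<le> n - 1"
proof -
  have "cnt n f v \<le> card {1..n-1}" unfolding cnt_def by (rule card_mono) auto
  then show ?thesis by simp
qed

lemma mainL:
  "Zfrak n (replicate m 1) * Zfrak n (replicate l (-1)) * TT n (one n) =
    (\<Sum>k\<le>n-1. if k \<le> m \<and> 2*k + l \<le> m + (n-1)
       then of_nat ((m + (n-1) - l - 2*k) choose (m-k)) * Ycal n (replicate k 2 @ replicate (m + (n-1) - l - 2*k) 1)
       else 0)"
proof -
  let ?P = "GG n 0 m \<times> HH n l"
  let ?psi = "\<lambda>p. (\<lambda>i. fst p i + snd p i + one n i)"
  let ?w = "\<lambda>f. (if cnt n f 2 \<le> m \<and> cnt n f 1 + 2 * cnt n f 2 + l = m + (n-1)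
      then cnt n f 1 choose (m - cnt n f 2) else 0)"
  have fP: "finite ?P" using finite_GG finite_HH by simp
  have "Zfrak n (replicate m 1) * Zfrak n (replicate l (-1)) * TT n (one n)
      = (\<Sum>g\<in>GG n 0 m. \<Sum>h\<in>HH n l. TT n g * TT n h * TT n (one n))"
    by (simp add: Zfrak_1 Zfrak_m1 sum_distrib_right sum_distrib_left mult.assoc) (rule sum.swap)
  also have "\<dots> = (\<Sum>p\<in>?P. TT n (?psi p))"
    by (simp add: sum.cartesian_product TT_add case_prod_beta)
  also have "\<dots> = (\<Sum>f\<in>VV n. \<Sum>p\<in>{p\<in>?P. ?psi p = f}. TT n (?psi p))"
  proof (rule sum.group[symmetric, OF fP finite_VV])
    show "?psi ` ?P \<subseteq> VV n"
    proof clarify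
      fix g h assume g: "g \<in> GG n 0 m" and h: "h \<in> HH n l"
      show "?psi (g, h) \<in> VV n"
        unfolding VV_def
      proof (intro CollectI conjI allI impI ballI)
        fix i :: nat assume "i \<notin> {1..n-1}"
        then show "?psi (g, h) i = 0" using g h by (simp add: GG_def HH_def one_def)
      next
        fix i :: nat assume i: "i \<in> {1..n-1}"
        have "g i = 0 \<or> g i = 1" using GG0_vals[OF g i] .
        moreover have "h i = 0 \<or> h i = -1" using h i by (auto simp: HH_def)
        moreover have "one n i = 1" using i by (simp add: one_def)
        ultimately show "?psi (g, h) i \<in> {0,1,2}" by auto
      qed
    qed
  qed
  also have "\<dots> = (\<Sum>f\<in>VV n. of_nat (?w f) * TT n f)"
  proof (rule sum.cong[OF refl])
    fix f assume f: "f \<in> VV n"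
    have "(\<Sum>p\<in>{p\<in>?P. ?psi p = f}. TT n (?psi p)) = (\<Sum>p\<in>{p\<in>?P. ?psi p = f}. TT n f)"
      by (rule sum.cong) auto
    also have "\<dots> = of_nat (card {p\<in>?P. ?psi p = f}) * TT n f" by simp
    finally show "(\<Sum>p\<in>{p\<in>?P. ?psi p = f}. TT n (?psi p)) = of_nat (?w f) * TT n f"
      using fiber_card[OF f, of m l] by simp
  qed
  also have "\<dots> = (\<Sum>k\<le>n-1. \<Sum>f\<in>{f\<in>VV n. cnt n f 2 = k}. of_nat (?w f) * TT n f)"
    by (rule sum.group[symmetric, OF finite_VV]) (use cnt_le in auto)
  also have "\<dots> = (\<Sum>k\<le>n-1. if k \<le> m \<and> 2*k + l \<le> m + (n-1)
       then of_nat ((m + (n-1) - l - 2*k) choose (m-k)) * Ycal n (replicate k 2 @ replicate (m + (n-1) - l - 2*k) 1)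
       else 0)"
  proof (rule sum.cong[OF refl])
    fix k assume "k \<in> {..n-1}"
    show "(\<Sum>f\<in>{f\<in>VV n. cnt n f 2 = k}. of_nat (?w f) * TT n f) = (if k \<le> m \<and> 2*k + l \<le> m + (n-1)
       then of_nat ((m + (n-1) - l - 2*k) choose (m-k)) * Ycal n (replicate k 2 @ replicate (m + (n-1) - l - 2*k) 1)
       else 0)"
    proof (cases "k \<le> m \<and> 2*k + l \<le> m + (n-1)")
      case True
      define R where "R = m + (n-1) - l - 2*k"
      have "(\<Sum>f\<in>{f\<in>VV n. cnt n f 2 = k}. of_nat (?w f) * TT n f)
          = (\<Sum>f\<in>{f\<in>VV n. cnt n f 2 = k}. if cnt n f 1 = R then of_nat (R choose (m-k)) * TT n f else 0)"
      proof (rule sum.cong[OF refl])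
        fix f assume "f \<in> {f\<in>VV n. cnt n f 2 = k}"
        then have "cnt n f 2 = k" by simp
        moreover have "cnt n f 1 + 2 * k + l = m + (n-1) \<longleftrightarrow> cnt n f 1 = R"
          using True by (auto simp: R_def)
        ultimately show "of_nat (?w f) * TT n f = (if cnt n f 1 = R then of_nat (R choose (m-k)) * TT n f else 0)"
          using True by auto
      qed
      also have "\<dots> = (\<Sum>f\<in>{f\<in>{f\<in>VV n. cnt n f 2 = k}. cnt n f 1 = R}. of_nat (R choose (m-k)) * TT n f)"
        by (rule sum.inter_filter[symmetric]) (simp add: finite_VV)
      also have "{f\<in>{f\<in>VV n. cnt n f 2 = k}. cnt n f 1 = R} = GG n k R"
        by (auto simp: VV_def GG_def)
      also have "(\<Sum>f\<in>GG n k R. of_nat (R choose (m-k)) * TT n f) = of_nat (R choose (m-k)) * Ycal n (replicate k 2 @ replicate R 1)"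
        by (simp add: Ycal_GG sum_distrib_left)
      finally show ?thesis by (subst if_P[OF True]) (simp add: R_def)
    next
      case False
      have "(\<Sum>f\<in>{f\<in>VV n. cnt n f 2 = k}. of_nat (?w f) * TT n f) = (\<Sum>f\<in>{f\<in>VV n. cnt n f 2 = k}. 0)"
      proof (rule sum.cong[OF refl])
        fix f assume "f \<in> {f\<in>VV n. cnt n f 2 = k}"
        then have "cnt n f 2 = k" by simp
        then have "?w f = 0" using False by auto
        then show "of_nat (?w f) * TT n f = 0" by simp
      qed
      then show ?thesis by (subst if_not_P[OF False]) simp
    qed
  qed
  finally show ?thesis .
qed


lemma Y_zero:
  assumes "a + b > n - 1"
  shows "Ycal n (replicate a 2 @ replicate b 1) = 0"
proof -
  have "GG n a b = {}"
  proof (rule ccontr)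
    assume "GG n a b \<noteq> {}"
    then obtain f where f: "f \<in> GG n a b" by blast
    let ?A = "{i\<in>{1..n-1}. f i = 2}" and ?B = "{i\<in>{1..n-1}. f i = 1}"
    have "card (?A \<union> ?B) = card ?A + card ?B" by (rule card_Un_disjoint) auto
    also have "\<dots> = a + b" using f by (simp add: GG_def cnt_def)
    finally have "a + b = card (?A \<union> ?B)" by simp
    also have "\<dots> \<le> card {1..n-1}" by (rule card_mono) auto
    finally show False using assms by simp
  qed
  then show ?thesis by (simp add: Ycal_GG)
qed

lemma Zfrak_nil: "Zfrak n [] = 1"
proof -
  have "{is. length is = 0 \<and> sorted_wrt (<) is \<and> set is \<subseteq> {1..n-1}} = {[]}" by auto
  then show ?thesis by (simp add: Zfrak_def)
qed

lemma sum_lessThan_add_split: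
  fixes p q :: nat
  shows "(\<Sum>k<p+q. f k) = (\<Sum>k<p. f k) + (\<Sum>j<q. f (p + j))"
  by (induction q) (simp_all add: add.assoc)


lemma term_match:
  fixes n m l j :: nat
  assumes "m + 1 \<le> n" "l \<le> m" "j < n - 1 - m"
  shows "(if Suc (m-l) + j \<le> m \<and> 2*(Suc (m-l) + j) + l \<le> m + (n-1)
      then of_nat ((m + (n-1) - l - 2*(Suc (m-l) + j)) choose (m-(Suc (m-l) + j)))
        * Ycal n (replicate (Suc (m-l) + j) 2 @ replicate (m + (n-1) - l - 2*(Suc (m-l) + j)) 1) else (0::complex))
   = (if int n - int m + int l - 3 - 2 * int j < 0 then 0
      else of_int (ibinom (int n - int m + int l - 3 - 2 * int j) (int l - 1 - int j))
        * Ycal n (replicate (nat (int m - int l + 1 + int j)) 2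
                  @ replicate (nat (int n - int m + int l - 3 - 2 * int j)) 1))"
proof (cases "j < l")
  case False
  then have "\<not> (Suc (m-l) + j \<le> m)" using assms by linarith
  moreover have "int l - 1 - int j < 0" using False by linarith
  ultimately show ?thesis by (simp add: ibinom_def)
next
  case jl: True
  show ?thesis
  proof (cases "2*(Suc (m-l) + j) + l \<le> m + (n-1)")
    case True
    define R where "R = m + (n-1) - l - 2*(Suc (m-l) + j)"
    have h1: "R + 2*(Suc (m-l) + j) + l = m + (n-1)" unfolding R_def using True by linarith
    have h2: "int (R + 2*(Suc (m-l) + j) + l) = int (m + (n-1))" using h1 by simp
    have h3: "int (m-l) = int m - int l" "int (n-1) = int n - 1" using assms by (simp_all add: of_nat_diff)
    have "int R + 2*(int (m-l) + 1 + int j) + int l = int m + int (n-1)" using h2 by simp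
    then have a: "int n - int m + int l - 3 - 2 * int j = int R" unfolding h3 by (simp add: algebra_simps)
    have b: "int l - 1 - int j = int (l - 1 - j)" using jl by linarith
    have c: "nat (int m - int l + 1 + int j) = Suc (m-l) + j" using assms by linarith
    have d: "m-(Suc (m-l) + j) = l - 1 - j" using assms jl by linarith
    have e: "Suc (m-l) + j \<le> m" using jl assms by linarith
    have ib: "ibinom (int R) (int l - 1 - int j) = int (R choose (l-1-j))"
    proof -
      have "\<not> (int l - 1 - int j < 0 \<or> int R < 0)" using jl by linarith
      moreover have "nat (int l - 1 - int j) = l - 1 - j" using jl by linarith
      ultimately show ?thesis unfolding ibinom_def by simp
    qed
    have cond: "Suc (m-l) + j \<le> m \<and> 2*(Suc (m-l) + j) + l \<le> m + (n-1)" using e True by simp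
    have nneg: "\<not> (int n - int m + int l - 3 - 2 * int j < 0)" unfolding a by simp
    show ?thesis
      apply (subst if_P[OF cond])
      apply (subst if_not_P[OF nneg])
      unfolding a ib c d R_def[symmetric] by simp
  next
    case False
    have "m + (n-1) < 2*(Suc (m-l) + j) + l" using False by linarith
    then have "int m + (int n - 1) < 2*(int m - int l + 1 + int j) + int l"
      using assms by (simp add: of_nat_diff)
    then have "int n - int m + int l - 3 - 2 * int j < 0" by (simp add: algebra_simps)
    then show ?thesis using False by simp
  qed
qed

lemma tail_zero:
  fixes n m l j :: nat
  assumes "m + 1 \<le> n" "l \<le> m" "j < l"
  defines "k \<equiv> Suc (m-l) + ((n-1-m)+j)"
  shows "(if k \<le> m \<and> 2*k + l \<le> m + (n-1)
      then of_nat ((m + (n-1) - l - 2*k) choose (m-k))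
        * Ycal n (replicate k 2 @ replicate (m + (n-1) - l - 2*k) 1) else (0::complex)) = 0"
proof -
  have "m + (n-1) - l - 2*k < m - k" if "k \<le> m \<and> 2*k + l \<le> m + (n-1)"
  proof -
    have kk: "k + l = n + j" using assms unfolding k_def by linarith
    show ?thesis using that kk assms(1) by linarith
  qed
  then show ?thesis by auto
qed

theorem proposition1:
  fixes n m l :: nat
  assumes "m + 1 \<le> n" and "l \<le> m"
  shows "Zfrak n (replicate m 1) * Zfrak n (replicate l (-1)) =
    of_nat ((n - m + l - 1) choose (n - m - 1)) * Zfrak n (replicate (m - l) 1)
    + (\<Prod>r=1..n-1. (1 - zeta n ^ r))
      * (\<Sum>j\<in>{0..int n - int m - 2}.
           (if int n - int m + int l - 3 - 2 * j < 0 then 0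
            else of_int (ibinom (int n - int m + int l - 3 - 2 * j) (int l - 1 - j))
              * Ycal n (replicate (nat (int m - int l + 1 + j)) 2
                        @ replicate (nat (int n - int m + int l - 3 - 2 * j)) 1)))"
proof -
  define N where "N = n - 1"
  have mN: "m \<le> N" using assms by (simp add: N_def)
  define Y where "Y = (\<lambda>a b. Ycal n (replicate a 2 @ replicate b 1))"
  define U where "U = (\<lambda>m l k. if k \<le> m \<and> 2*k + l \<le> m + N
     then of_nat ((m + N - l - 2*k) choose (m-k)) * Y k (m + N - l - 2*k) else (0::complex))"
  define stm where "stm = (\<lambda>j::int. if int n - int m + int l - 3 - 2 * j < 0 then 0
            else of_int (ibinom (int n - int m + int l - 3 - 2 * j) (int l - 1 - j))
              * Ycal n (replicate (nat (int m - int l + 1 + j)) 2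
                        @ replicate (nat (int n - int m + int l - 3 - 2 * j)) 1))"
  define P where "P = (\<Prod>r=1..n-1. (1 - zeta n ^ r))"
  define T1 where "T1 = TT n (one n)"
  have TP: "T1 * P = 1" using TT_one_P by (simp add: T1_def P_def)
  have M1: "Zfrak n (replicate m 1) * Zfrak n (replicate l (-1)) * T1 = (\<Sum>k\<le>N. U m l k)"
    using mainL[of n m l] unfolding N_def[symmetric] U_def Y_def T1_def by simp
  have M2: "Zfrak n (replicate (m-l) 1) * T1 = (\<Sum>k\<le>N. U (m-l) 0 k)"
    using mainL[of n "m-l" 0] unfolding N_def[symmetric] U_def Y_def T1_def by (simp add: Zfrak_nil)
  have Ua: "(\<Sum>k\<le>N. U (m-l) 0 k) = Y (m-l) (N-(m-l))"
  proof -
    have mem: "m - l \<in> {..N}" using mN by simp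
    have "(\<Sum>k\<le>N. U (m-l) 0 k) = U (m-l) 0 (m-l) + (\<Sum>k\<in>{..N}-{m-l}. U (m-l) 0 k)"
      by (rule sum.remove[OF _ mem]) simp
    also have "(\<Sum>k\<in>{..N}-{m-l}. U (m-l) 0 k) = 0"
    proof (rule sum.neutral, rule ballI)
      fix k assume k: "k \<in> {..N}-{m-l}"
      show "U (m-l) 0 k = 0"
      proof (cases "k < m - l")
        case True
        have "Y k (m - l + N - 0 - 2*k) = 0" unfolding Y_def
          by (rule Y_zero) (use True mN in \<open>simp add: N_def\<close>)
        then show ?thesis by (simp add: U_def)
      next
        case False
        then have "\<not> k \<le> m - l" using k by auto
        then show ?thesis by (simp add: U_def)
      qed
    qed
    also have "U (m-l) 0 (m-l) = Y (m-l) (N-(m-l))"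
    proof -
      have "m - l \<le> N" "2 * (m-l) + 0 \<le> m - l + N" "m - l + N - 0 - 2 * (m-l) = N - (m-l)" using mN by auto
      then show ?thesis by (simp add: U_def)
    qed
    finally show ?thesis by simp
  qed
  have S: "(\<Sum>k\<le>N. U m l k) = of_nat ((N-m+l) choose l) * Y (m-l) (N-(m-l)) + (\<Sum>j<N-m. stm (int j))"
  proof -
    have e1: "{..N} = {..<(Suc (m-l)) + (N-(m-l))}" using mN by auto
    have "(\<Sum>k\<le>N. U m l k) = (\<Sum>k<Suc (m-l). U m l k) + (\<Sum>j<N-(m-l). U m l (Suc (m-l) + j))"
      unfolding e1 by (rule sum_lessThan_add_split)
    also have "(\<Sum>k<Suc (m-l). U m l k) = (\<Sum>k<m-l. U m l k) + U m l (m-l)" by simp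
    also have "(\<Sum>k<m-l. U m l k) = 0"
    proof (rule sum.neutral, rule ballI)
      fix k assume k: "k \<in> {..<m-l}"
      have "Y k (m + N - l - 2*k) = 0" unfolding Y_def
        by (rule Y_zero) (use k mN in \<open>simp add: N_def\<close>)
      then show "U m l k = 0" by (simp add: U_def)
    qed
    also have "U m l (m-l) = of_nat ((N-m+l) choose l) * Y (m-l) (N-(m-l))"
    proof -
      have c: "(m - l \<le> m \<and> 2*(m-l) + l \<le> m + N) = True" using mN assms by auto
      have e: "m + N - l - 2*(m-l) = N-m+l" "m - (m-l) = l" "N - (m-l) = N-m+l"
        using mN assms by auto
      show ?thesis unfolding U_def by (simp only: c if_True e)
    qed
    also have "(\<Sum>j<N-(m-l). U m l (Suc (m-l) + j)) = (\<Sum>j<(N-m)+l. U m l (Suc (m-l) + j))"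
      using mN assms by (simp add: Suc_diff_le)
    also have "\<dots> = (\<Sum>j<N-m. U m l (Suc (m-l) + j)) + (\<Sum>j<l. U m l (Suc (m-l) + ((N-m)+j)))"
      by (rule sum_lessThan_add_split)
    also have "(\<Sum>j<l. U m l (Suc (m-l) + ((N-m)+j))) = 0"
    proof (rule sum.neutral, rule ballI)
      fix j assume j: "j \<in> {..<l}"
      have jl: "j < l" using j by simp
      show "U m l (Suc (m-l) + ((N-m)+j)) = 0"
        unfolding U_def Y_def N_def by (rule tail_zero[OF assms jl])
    qed
    also have "(\<Sum>j<N-m. U m l (Suc (m-l) + j)) = (\<Sum>j<N-m. stm (int j))"
    proof (rule sum.cong[OF refl])
      fix j assume j: "j \<in> {..<N-m}"
      have j': "j < n - 1 - m" using j by (simp add: N_def)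
      show "U m l (Suc (m-l) + j) = stm (int j)"
        unfolding U_def Y_def N_def stm_def by (rule term_match[OF assms j'])
    qed
    finally show ?thesis by simp
  qed
  have I: "(\<Sum>j\<in>{0..int n - int m - 2}. stm j) = (\<Sum>j<N-m. stm (int j))"
  proof -
    have "{0..int n - int m - 2} = int ` {..<N-m}"
    proof (intro set_eqI iffI)
      fix x assume x: "x \<in> {0..int n - int m - 2}"
      then have "nat x < N - m" "x = int (nat x)" using assms by (auto simp: N_def)
      then show "x \<in> int ` {..<N-m}" by blast
    qed (use assms in \<open>auto simp: N_def\<close>)
    then show ?thesis by (simp add: sum.reindex)
  qed
  have C: "(n - m + l - 1) choose (n - m - 1) = (N-m+l) choose l"
  proof -
    have "n - m + l - 1 = N-m+l" "n - m - 1 = (N-m+l) - l" using assms by (auto simp: N_def)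
    moreover have "(N-m+l) choose ((N-m+l) - l) = (N-m+l) choose l"
      by (rule binomial_symmetric[symmetric]) simp
    ultimately show ?thesis by simp
  qed
  have goal: "Zfrak n (replicate m 1) * Zfrak n (replicate l (-1)) =
    of_nat ((n - m + l - 1) choose (n - m - 1)) * Zfrak n (replicate (m - l) 1)
    + P * (\<Sum>j\<in>{0..int n - int m - 2}. stm j)"
  proof -
    have "Zfrak n (replicate m 1) * Zfrak n (replicate l (-1))
        = Zfrak n (replicate m 1) * Zfrak n (replicate l (-1)) * (T1 * P)" using TP by simp
    also have "\<dots> = (\<Sum>k\<le>N. U m l k) * P" using M1 by (simp add: mult.assoc)
    also have "\<dots> = of_nat ((N-m+l) choose l) * (Y (m-l) (N-(m-l)) * P) + P * (\<Sum>j<N-m. stm (int j))"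
      unfolding S by (simp add: algebra_simps)
    also have "Y (m-l) (N-(m-l)) * P = Zfrak n (replicate (m-l) 1)"
      using M2 Ua TP by (metis mult.assoc mult_1_right)
    finally show ?thesis using I C by simp
  qed
  then show ?thesis by (simp only: stm_def P_def)
qed

end
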